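(* For any graph $G$, any vertex $v\in V(G)$, any integer $k\ge 2$ and any integer $r\ge 3$, $$R_r(\mathcal{B}(G),k)\le R(\mathcal{G}^*(v),k)+r-2.$$
   Context: For a graph $G$, a hypergraph $H$ is a Berge-$G$ hypergraph if there are an injective map $\phi:V(G)\to V(H)$ and pairwise distinct hyperedges $e_{xy}\in E(H)$, one for each $xy\in E(G)$, with $\phi(x),\phi(y)\in e_{xy}$. $\mathcal{B}(G)$ denotes the family of all Berge-$G$ hypergraphs. $K_n^r$ denotes the complete $r$-uniform hypergraph on $n$ vertices. For a family $\mathcal{H}$ of $r$-uniform hypergraphs and integers $k\ge 2$, $r\ge 2$, $R_r(\mathcal{H},k)$ is the smallest $n$ such that every $k$-coloring of the hyperedges of $K_n^r$ contains a monochromatic subhypergraph belonging to $\mathcal{H}$. For a family $\mathcal{G}$ of graphs, $R(\mathcal{G},k)$ is the smallest $n$ such that every $k$-coloring of the edges of the complete graph $K_n$ contains a monochromatic subgraph isomorphic to some member of $\mathcal{G}$. For a graph $G$ and $v\in V(G)$ with neighborhood $N(v)=\{q_1,\dots,q_t\}$, let $G'=G-v$. An extension of $G-v$ is any graph obtained from $G'$ by adding, for each $i=1,\dots,t$, an edge $q_ir_i$ not belonging to $G'$, where each $r_i$ is either a vertex of $G'$ or a new vertex not in $G'$ (new vertices may be shared by several $r_i$), and the $t$ added edges are pairwise distinct. $\mathcal{G}^*(v)$ denotes the family of all such extensions (it contains $G$ itself). *)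

theory Defs
  imports Main
begin

definition simple_graph :: "'a set \<Rightarrow> 'a set set \<Rightarrow> bool" where
  "simple_graph V E \<longleftrightarrow> finite V \<and> (\<forall>e\<in>E. e \<subseteq> V \<and> card e = 2)"

definition nbhd :: "'a set set \<Rightarrow> 'a \<Rightarrow> 'a set" where
  "nbhd E v = {u. {v, u} \<in> E}"

definition is_berge :: "'a set \<Rightarrow> 'a set set \<Rightarrow> 'b set \<Rightarrow> 'b set set \<Rightarrow> bool" where
  "is_berge V E VH EH \<longleftrightarrow>
     (\<exists>(\<phi> :: 'a \<Rightarrow> 'b) (h :: 'a set \<Rightarrow> 'b set).
        inj_on \<phi> V \<and> \<phi> ` V \<subseteq> VH \<and> inj_on h E \<and> h ` E \<subseteq> EH \<and>
        (\<forall>xy\<in>E. \<phi> ` xy \<subseteq> h xy))"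

text \<open>Extensions of G - v.  Old vertices are tagged Inl, new vertices are Inr j.
  rho q is the vertex r_i joined to the neighbour q = q_i of v.\<close>
definition extension :: "'a set \<Rightarrow> 'a set set \<Rightarrow> 'a \<Rightarrow> ('a + nat) set \<Rightarrow> ('a + nat) set set \<Rightarrow> bool" where
  "extension V E v W F \<longleftrightarrow>
     (\<exists>\<rho> :: 'a \<Rightarrow> 'a + nat.
        (\<forall>q\<in>nbhd E v. \<rho> q \<in> Inl ` (V - {v}) \<union> range Inr) \<and>
        (\<forall>q\<in>nbhd E v. \<rho> q \<noteq> Inl q) \<and>
        (\<forall>q\<in>nbhd E v. {Inl q, \<rho> q} \<notin> (\<lambda>e. Inl ` e) ` {e\<in>E. v \<notin> e}) \<and>
        inj_on (\<lambda>q. {Inl q, \<rho> q}) (nbhd E v) \<and>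
        W = Inl ` (V - {v}) \<union> \<rho> ` nbhd E v \<and>
        F = (\<lambda>e. Inl ` e) ` {e\<in>E. v \<notin> e} \<union> (\<lambda>q. {Inl q, \<rho> q}) ` nbhd E v)"

definition ext_family :: "'a set \<Rightarrow> 'a set set \<Rightarrow> 'a \<Rightarrow> (('a + nat) set \<times> ('a + nat) set set) set" where
  "ext_family V E v = {(W, F). extension V E v W F}"

definition ramsey_graph :: "('b set \<times> 'b set set) set \<Rightarrow> nat \<Rightarrow> nat" where
  "ramsey_graph \<G> k = (LEAST n. \<forall>c :: nat set \<Rightarrow> nat.
      (\<forall>e. e \<subseteq> {..<n} \<and> card e = 2 \<longrightarrow> c e < k) \<longrightarrow>
      (\<exists>(W, F)\<in>\<G>. \<exists>i<k. \<exists>f :: 'b \<Rightarrow> nat.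
          inj_on f W \<and> f ` W \<subseteq> {..<n} \<and> (\<forall>e\<in>F. c (f ` e) = i)))"

definition ramsey_berge :: "nat \<Rightarrow> 'a set \<Rightarrow> 'a set set \<Rightarrow> nat \<Rightarrow> nat" where
  "ramsey_berge r V E k = (LEAST n. \<forall>c :: nat set \<Rightarrow> nat.
      (\<forall>e. e \<subseteq> {..<n} \<and> card e = r \<longrightarrow> c e < k) \<longrightarrow>
      (\<exists>i<k. \<exists>VH EH. VH \<subseteq> {..<n} \<and>
          (\<forall>e\<in>EH. e \<subseteq> VH \<and> card e = r \<and> c e = i) \<and> is_berge V E VH EH))"

end

theory Submission
  imports Defs "HOL-Library.Ramsey"
begin

lemma star_ext:
  assumes "simple_graph V E" "v \<in> V"
  defines "W \<equiv> Inl ` (V - {v}) \<union> (\<lambda>q. Inr (0::nat)) ` nbhd E v"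
  defines "F \<equiv> (\<lambda>e. Inl ` e) ` {e\<in>E. v \<notin> e} \<union> (\<lambda>q. {Inl q, Inr (0::nat)}) ` nbhd E v"
  shows "(W, F) \<in> ext_family V E v" "finite W" "\<forall>e\<in>F. e \<subseteq> W \<and> card e = 2"
proof -
  show "(W, F) \<in> ext_family V E v"
    unfolding ext_family_def extension_def W_def F_def
    by (auto intro!: exI[of _ "\<lambda>q. Inr 0"] simp: inj_on_def doubleton_eq_iff)
  have fin: "finite V" using assms(1) by (simp add: simple_graph_def)
  have nb: "nbhd E v \<subseteq> V" using assms(1) unfolding simple_graph_def nbhd_def by auto
  show "finite W" unfolding W_def using fin nb finite_subset by auto
  show "\<forall>e\<in>F. e \<subseteq> W \<and> card e = 2"
  proof
    fix e assume "e \<in> F"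
    then consider e' where "e' \<in> E" "v \<notin> e'" "e = Inl ` e'" | q where "q \<in> nbhd E v" "e = {Inl q, Inr 0}"
      unfolding F_def by auto
    then show "e \<subseteq> W \<and> card e = 2"
    proof cases
      case 1
      then have "e' \<subseteq> V" "card e' = 2" using assms(1) by (auto simp: simple_graph_def)
      then show ?thesis using 1 by (auto simp: W_def card_image)
    next
      case 2
      then have "{v,q} \<in> E" by (simp add: nbhd_def)
      then have "q \<in> V" "q \<noteq> v" using assms(1) unfolding simple_graph_def by (auto simp: card_insert_if split: if_splits)
      then show ?thesis using 2 by (auto simp: W_def)
    qed
  qed
qed

lemma graph_exists:
  assumes "simple_graph V E" "v \<in> V"
  shows "\<exists>N. \<forall>c :: nat set \<Rightarrow> nat.
      (\<forall>e. e \<subseteq> {..<N} \<and> card e = 2 \<longrightarrow> c e < k) \<longrightarrow>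
      (\<exists>(W, F)\<in>ext_family V E v. \<exists>i<k. \<exists>f :: ('a + nat) \<Rightarrow> nat.
          inj_on f W \<and> f ` W \<subseteq> {..<N} \<and> (\<forall>e\<in>F. c (f ` e) = i))"
proof -
  define W where "W \<equiv> Inl ` (V - {v}) \<union> (\<lambda>q. Inr (0::nat)) ` nbhd E v"
  define F where "F \<equiv> (\<lambda>e. Inl ` e) ` {e\<in>E. v \<notin> e} \<union> (\<lambda>q. {Inl q, Inr (0::nat)}) ` nbhd E v"
  note st = star_ext[OF assms, folded W_def F_def]
  obtain N :: nat where N: "partn_lst {..<N} (replicate k (card W)) 2" using ramsey_full by blast
  show ?thesis
  proof (intro exI allI impI)
    fix c :: "nat set \<Rightarrow> nat"
    assume c: "\<forall>e. e \<subseteq> {..<N} \<and> card e = 2 \<longrightarrow> c e < k"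
    have "c \<in> nsets {..<N} 2 \<rightarrow> {..<k}" using c by (auto simp: nsets_def)
    then obtain i H where i: "i < k" and H: "H \<in> nsets {..<N} (card W)" and col: "c ` (nsets H 2) \<subseteq> {i}"
      using partn_lstE[OF N] by (metis length_replicate nth_replicate)
    have "finite H" "card H = card W" "H \<subseteq> {..<N}" using H i by (auto simp: nsets_def)
    then obtain f where f: "bij_betw f W H" using finite_same_card_bij st(2) by metis
    have "\<forall>e\<in>F. c (f ` e) = i"
    proof
      fix e assume "e \<in> F"
      have "e \<subseteq> W" "card e = 2" using st(3) \<open>e \<in> F\<close> by auto
      moreover have "finite e" using \<open>card e = 2\<close> card.infinite by fastforce
      ultimately have "f ` e \<in> nsets H 2" using f
        by (auto simp: nsets_def bij_betw_def card_image inj_on_subset intro: finite_subset)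
      then show "c (f ` e) = i" using col by auto
    qed
    then show "\<exists>(W, F)\<in>ext_family V E v. \<exists>i<k. \<exists>f :: ('a + nat) \<Rightarrow> nat.
          inj_on f W \<and> f ` W \<subseteq> {..<N} \<and> (\<forall>e\<in>F. c (f ` e) = i)"
      using st(1) i f \<open>H \<subseteq> {..<N}\<close> by (auto simp: bij_betw_def intro!: bexI[of _ "(W,F)"])
  qed
qed
theorem theorem2:
  fixes V :: "'a set" and E :: "'a set set" and v :: 'a and k r :: nat
  assumes "simple_graph V E" and "v \<in> V" and "k \<ge> 2" and "r \<ge> 3"
  shows "ramsey_berge r V E k \<le> ramsey_graph (ext_family V E v) k + r - 2"
proof -
  define N where "N = ramsey_graph (ext_family V E v) k"
  have PN: "\<forall>c :: nat set \<Rightarrow> nat.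
      (\<forall>e. e \<subseteq> {..<N} \<and> card e = 2 \<longrightarrow> c e < k) \<longrightarrow>
      (\<exists>(W, F)\<in>ext_family V E v. \<exists>i<k. \<exists>f :: ('a + nat) \<Rightarrow> nat.
          inj_on f W \<and> f ` W \<subseteq> {..<N} \<and> (\<forall>e\<in>F. c (f ` e) = i))"
    unfolding N_def ramsey_graph_def
    using graph_exists[OF assms(1,2), of k] by (rule LeastI_ex)
  define S where "S = {N..<N+r-2}"
  have cardS: "card S = r - 2" "finite S" and NS: "N \<in> S" using assms(4) by (auto simp: S_def)
  have fin: "finite V" using assms(1) by (simp add: simple_graph_def)
  have Eprop: "\<And>e. e \<in> E \<Longrightarrow> e \<subseteq> V \<and> card e = 2" using assms(1) by (simp add: simple_graph_def)
  show ?thesis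
    unfolding N_def[symmetric] ramsey_berge_def
  proof (rule Least_le, intro allI impI)
    fix c :: "nat set \<Rightarrow> nat"
    assume c: "\<forall>e. e \<subseteq> {..<N + r - 2} \<and> card e = r \<longrightarrow> c e < k"
    define c' where "c' e = c (e \<union> S)" for e
    have "\<forall>e. e \<subseteq> {..<N} \<and> card e = 2 \<longrightarrow> c' e < k"
    proof (intro allI impI)
      fix e assume e: "e \<subseteq> {..<N} \<and> card e = 2"
      then have "finite e" using card.infinite by fastforce
      moreover have "e \<inter> S = {}" using e by (auto simp: S_def)
      ultimately have "card (e \<union> S) = r" using e cardS assms(4) by (simp add: card_Un_disjoint)
      moreover have "e \<union> S \<subseteq> {..<N + r - 2}" using e assms(4) by (auto simp: S_def)
      ultimately show "c' e < k" using c by (simp add: c'_def)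
    qed
    from PN[THEN spec[of _ c'], THEN mp, OF this] obtain WF where WF0: "WF \<in> ext_family V E v" and
      ex: "\<exists>i<k. \<exists>f :: ('a + nat) \<Rightarrow> nat. inj_on f (fst WF) \<and> f ` (fst WF) \<subseteq> {..<N} \<and> (\<forall>e\<in>snd WF. c' (f ` e) = i)"
      by (auto simp: case_prod_beta)
    obtain W F where WFd: "WF = (W, F)" by (cases WF)
    from ex obtain i f where i: "i < k"
      and f: "inj_on (f :: ('a + nat) \<Rightarrow> nat) W" "f ` W \<subseteq> {..<N}" and col0: "\<forall>e\<in>F. c' (f ` e) = i"
      unfolding WFd by auto
    have WF: "(W, F) \<in> ext_family V E v" using WF0 WFd by simp
    have col: "\<forall>e\<in>F. c (f ` e \<union> S) = i" using col0 by (simp add: c'_def)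
    from WF obtain \<rho> where
      r1: "\<forall>q\<in>nbhd E v. \<rho> q \<noteq> Inl q" and
      r2: "\<forall>q\<in>nbhd E v. {Inl q, \<rho> q} \<notin> (\<lambda>e. Inl ` e) ` {e\<in>E. v \<notin> e}" and
      r3: "inj_on (\<lambda>q. {Inl q, \<rho> q}) (nbhd E v)" and
      Wd: "W = Inl ` (V - {v}) \<union> \<rho> ` nbhd E v" and
      Fd: "F = (\<lambda>e. Inl ` e) ` {e\<in>E. v \<notin> e} \<union> (\<lambda>q. {Inl q, \<rho> q}) ` nbhd E v"
      unfolding ext_family_def extension_def by blast
    define g where "g xy = (if v \<in> xy then {Inl (the_elem (xy - {v})), \<rho> (the_elem (xy - {v}))} else Inl ` xy)" for xy
    define h where "h xy = f ` g xy \<union> S" for xy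
    define \<phi> where "\<phi> x = (if x = v then N else f (Inl x))" for x
    have vq: "\<exists>q. xy = {v, q} \<and> q \<in> nbhd E v \<and> q \<in> V \<and> q \<noteq> v \<and> g xy = {Inl q, \<rho> q}"
      if xyE: "xy \<in> E" and vxy: "v \<in> xy" for xy
    proof -
      have "card xy = 2" "xy \<subseteq> V" using Eprop xyE by auto
      then obtain a b where ab: "xy = {a,b}" "a \<noteq> b" by (meson card_2_iff)
      then obtain q where q: "xy = {v,q}" "q \<noteq> v" using vxy by auto
      then have "xy - {v} = {q}" by auto
      then show ?thesis using q xyE \<open>xy \<subseteq> V\<close> by (auto simp: g_def nbhd_def)
    qed
    have gF: "g xy \<in> F \<and> g xy \<subseteq> W \<and> card (g xy) = 2" if xyE: "xy \<in> E" for xy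
    proof (cases "v \<in> xy")
      case True
      then obtain q where q: "xy = {v, q}" "q \<in> nbhd E v" "q \<in> V" "q \<noteq> v" "g xy = {Inl q, \<rho> q}"
        using vq xyE by blast
      then show ?thesis using r1 by (auto simp: Fd Wd)
    next
      case False
      then have "g xy = Inl ` xy" by (simp add: g_def)
      then show ?thesis using False xyE Eprop[OF xyE] by (auto simp: Fd Wd card_image)
    qed
    have hprop: "h xy \<subseteq> {..<N + r - 2} \<and> card (h xy) = r \<and> c (h xy) = i \<and> f ` g xy = h xy \<inter> {..<N}"
      if "xy \<in> E" for xy
    proof -
      have g: "g xy \<in> F" "g xy \<subseteq> W" "card (g xy) = 2" using gF that by auto
      have fg: "f ` g xy \<subseteq> {..<N}" using g f by auto
      have "card (f ` g xy) = 2" using g f by (simp add: card_image inj_on_subset)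
      moreover have "f ` g xy \<inter> S = {}" using fg by (auto simp: S_def)
      moreover have "finite (f ` g xy)" using \<open>card (f ` g xy) = 2\<close> by (intro card_ge_0_finite) simp
      ultimately have "card (h xy) = r" unfolding h_def using cardS assms(4) by (simp only: card_Un_disjoint)
      moreover have "h xy \<subseteq> {..<N + r - 2}" using fg assms(4) by (auto simp: h_def S_def)
      moreover have "f ` g xy = h xy \<inter> {..<N}" using fg by (auto simp: h_def S_def)
      moreover have "c (h xy) = i" using col g(1) unfolding h_def by blast
      ultimately show ?thesis by blast
    qed
    have ginj: "inj_on g E"
    proof (rule inj_onI)
      fix x y assume x: "x \<in> E" and y: "y \<in> E" and eq: "g x = g y"
      show "x = y"
      proof (cases "v \<in> x"; cases "v \<in> y")
        assume "v \<in> x" "v \<in> y"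
        then obtain p q where "x = {v,p}" "p \<in> nbhd E v" "g x = {Inl p, \<rho> p}"
          "y = {v,q}" "q \<in> nbhd E v" "g y = {Inl q, \<rho> q}" using vq x y by metis
        then show ?thesis using r3 eq by (metis (no_types, lifting) inj_onD)
      next
        assume "v \<in> x" "v \<notin> y"
        then obtain p where "p \<in> nbhd E v" "g x = {Inl p, \<rho> p}" using vq x by metis
        moreover have "g y = Inl ` y" using \<open>v \<notin> y\<close> by (simp add: g_def)
        ultimately have "{Inl p, \<rho> p} \<in> (\<lambda>e. Inl ` e) ` {e\<in>E. v \<notin> e}"
          using eq y \<open>v \<notin> y\<close> by auto
        then show ?thesis using r2 \<open>p \<in> nbhd E v\<close> by blast
      next
        assume "v \<notin> x" "v \<in> y"
        then obtain p where "p \<in> nbhd E v" "g y = {Inl p, \<rho> p}" using vq y by metis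
        moreover have "g x = Inl ` x" using \<open>v \<notin> x\<close> by (simp add: g_def)
        ultimately have "{Inl p, \<rho> p} \<in> (\<lambda>e. Inl ` e) ` {e\<in>E. v \<notin> e}"
          using eq x \<open>v \<notin> x\<close> by auto
        then show ?thesis using r2 \<open>p \<in> nbhd E v\<close> by blast
      next
        assume "v \<notin> x" "v \<notin> y"
        then show ?thesis using eq by (simp add: g_def inj_image_eq_iff)
      qed
    qed
    have hinj: "inj_on h E"
    proof (rule inj_onI)
      fix x y assume x: "x \<in> E" and y: "y \<in> E" and eq: "h x = h y"
      then have "f ` g x = f ` g y" using hprop by metis
      then have "g x = g y" using gF[OF x] gF[OF y] f(1) by (simp add: inj_on_image_eq_iff)
      then show "x = y" using ginj x y by (simp add: inj_on_eq_iff)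
    qed
    have phiinj: "inj_on \<phi> V"
    proof (rule inj_onI)
      fix x y assume x: "x \<in> V" and y: "y \<in> V" and eq: "\<phi> x = \<phi> y"
      have W1: "\<And>z. z \<in> V \<Longrightarrow> z \<noteq> v \<Longrightarrow> Inl z \<in> W" by (simp add: Wd)
      have lt: "\<And>z. z \<in> V \<Longrightarrow> z \<noteq> v \<Longrightarrow> f (Inl z) < N" using W1 f(2) by blast
      show "x = y"
        using eq lt[OF x] lt[OF y] inj_onD[OF f(1) _ W1[OF x] W1[OF y]]
        by (auto simp: \<phi>_def split: if_splits)
    qed
    have phiV: "\<phi> ` V \<subseteq> {..<N + r - 2}"
    proof -
      have "\<And>z. z \<in> V \<Longrightarrow> z \<noteq> v \<Longrightarrow> f (Inl z) < N" using f(2) by (auto simp: Wd)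
      then show ?thesis using assms(4) by (fastforce simp: \<phi>_def dest: less_le_trans[of _ N "N + r - 2"])
    qed
    have phih: "\<forall>xy\<in>E. \<phi> ` xy \<subseteq> h xy"
    proof
      fix xy assume xy: "xy \<in> E"
      show "\<phi> ` xy \<subseteq> h xy"
      proof (cases "v \<in> xy")
        case True
        then obtain q where "xy = {v, q}" "q \<noteq> v" "g xy = {Inl q, \<rho> q}" using vq xy by blast
        then show ?thesis using NS by (auto simp: h_def \<phi>_def)
      next
        case False
        then show ?thesis by (auto simp: h_def \<phi>_def g_def)
      qed
    qed
    show "\<exists>i<k. \<exists>VH EH. VH \<subseteq> {..<N + r - 2} \<and>
          (\<forall>e\<in>EH. e \<subseteq> VH \<and> card e = r \<and> c e = i) \<and> is_berge V E VH EH"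
    proof (intro exI conjI)
      show "i < k" by (rule i)
      show "{..<N + r - 2} \<subseteq> {..<N + r - 2}" by simp
      show "\<forall>e\<in>h ` E. e \<subseteq> {..<N + r - 2} \<and> card e = r \<and> c e = i" using hprop by blast
      show "is_berge V E {..<N + r - 2} (h ` E)"
        unfolding is_berge_def
        apply (rule exI[of _ \<phi>], rule exI[of _ h])
        using phiinj phiV hinj phih by blast
    qed
  qed
qed
end
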